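(* Let $k\ge1$. The code $C=\Phi_R(\mathcal{S}_k^{\alpha})$ over $\mathbb{F}_q$ has length $q^{s(k+1)-1}$, has $q^{sk}$ codewords, and has minimum Hamming distance $q^{s(k+1)-2}(q-1)$. Moreover its Hamming weight enumerator is $W_C(X,Y)=A_\ell X^{n'-\ell}Y^\ell+X^{n'}$, where $n'=q^{s(k+1)-1}$, $A_\ell=q^{sk}-1$ and $\ell=q^{s(k+1)-2}(q-1)$.
   Context: Let $R$ be a finite commutative chain ring: a finite commutative ring with $1\neq0$ whose ideals form a single chain under inclusion. Its unique maximal ideal is principal, generated by some $\gamma$; let $s\ge1$ be the least integer with $\gamma^s=0$. The residue field $R/\langle\gamma\rangle$ is isomorphic to $\mathbb{F}_q$, $q$ a prime power, and $\bar r$ denotes the image of $r\in R$ in it. Fix a set $T=\{e_0,\dots,e_{q-1}\}\subseteq R$ of coset representatives of $R/\langle\gamma\rangle$ with $e_0=0$, $e_1=1$, ordered $e_0<\dots<e_{q-1}$. Every $r\in R$ has a unique $\gamma$-adic representation $r=\sum_{i=0}^{s-1}r_i\gamma^i$ with $r_i\in T$. Order $R$ by: $x>y$ iff $x_i>y_i$ in $T$ for the largest $i$ with $x_i\neq y_i$. List $R=\{\rho_0,\dots,\rho_{q^s-1}\}$ increasingly. For $a\in R$, $\mathbf{a}^{(m)}$ is the constant vector of length $m$. Define $G_1^\alpha=(\rho_0\ \rho_1\ \cdots\ \rho_{q^s-1})$ and, for $k>1$, $G_k^\alpha$ as the $k\times q^{sk}$ matrix of $q^s$ column blocks, the $j$-th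 block having first row $\boldsymbol{\rho_j}^{(q^{s(k-1)})}$ and a copy of $G_{k-1}^\alpha$ below it. $\mathcal{S}_k^\alpha$ is the $R$-submodule of $R^{q^{sk}}$ generated by the rows of $G_k^\alpha$. Gray map: let $M$ be the $s\times q^{s-1}$ matrix over $\mathbb{F}_q$ (a generator matrix of the first order $q$-ary Reed–Muller code of length $q^{s-1}$) whose columns are exactly the vectors $(v,1)^T$, $v\in\mathbb{F}_q^{s-1}$; define $\Phi_R:R\to\mathbb{F}_q^{q^{s-1}}$ by $\Phi_R(r)=(\bar r_0,\dots,\bar r_{s-1})M$ and extend it coordinatewise to $R^n\to\mathbb{F}_q^{nq^{s-1}}$. The Hamming weight enumerator of a code $C$ of length $n$ is $\sum_iA_iX^{n-i}Y^i$ with $A_i$ the number of codewords of Hamming weight $i$. *)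

theory Defs
  imports Complex_Main
begin

definition is_ideal :: "'a::comm_ring_1 set \<Rightarrow> bool" where
  "is_ideal I \<longleftrightarrow> 0 \<in> I \<and> (\<forall>x\<in>I. \<forall>y\<in>I. x + y \<in> I) \<and> (\<forall>r. \<forall>x\<in>I. r * x \<in> I)"

definition principal_ideal :: "'a::comm_ring_1 \<Rightarrow> 'a set" where
  "principal_ideal g = {r * g | r. True}"

definition is_maximal_ideal :: "'a::comm_ring_1 set \<Rightarrow> bool" where
  "is_maximal_ideal M \<longleftrightarrow> is_ideal M \<and> M \<noteq> UNIV \<and>
     (\<forall>J. is_ideal J \<and> M \<subseteq> J \<longrightarrow> J = M \<or> J = UNIV)"

definition chain_ring :: "'a::{comm_ring_1,finite} itself \<Rightarrow> bool" where
  "chain_ring _ \<longleftrightarrow> (\<forall>I J :: 'a set. is_ideal I \<and> is_ideal J \<longrightarrow> I \<subseteq> J \<or> J \<subseteq> I)"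

definition residue :: "'a::comm_ring_1 \<Rightarrow> 'a \<Rightarrow> 'a set" where
  "residue g a = {a + t * g | t. True}"

definition resq :: "'a::{comm_ring_1,finite} \<Rightarrow> nat" where
  "resq g = card (residue g ` UNIV)"

definition digits :: "'a::comm_ring_1 list \<Rightarrow> 'a \<Rightarrow> nat \<Rightarrow> 'a \<Rightarrow> 'a list" where
  "digits T g s r = (THE ds. length ds = s \<and> set ds \<subseteq> set T \<and> r = (\<Sum>i<s. ds ! i * g ^ i))"

text \<open>Position of an element of T (the order e_0 < e_1 < ... on T).\<close>
definition tidx :: "'a list \<Rightarrow> 'a \<Rightarrow> nat" where
  "tidx T e = (THE j. j < length T \<and> T ! j = e)"

definition R_less :: "'a::comm_ring_1 list \<Rightarrow> 'a \<Rightarrow> nat \<Rightarrow> 'a \<Rightarrow> 'a \<Rightarrow> bool" where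
  "R_less T g s x y \<longleftrightarrow> (\<exists>i<s. tidx T (digits T g s x ! i) < tidx T (digits T g s y ! i) \<and>
      (\<forall>j. i < j \<and> j < s \<longrightarrow> digits T g s x ! j = digits T g s y ! j))"

definition rho :: "'a::{comm_ring_1,finite} list \<Rightarrow> 'a \<Rightarrow> nat \<Rightarrow> nat \<Rightarrow> 'a" where
  "rho T g s j = (THE r. card {y. R_less T g s y r} = j)"

text \<open>Gm rh N k i c = entry (row i, column c) of G_k, with N = q^s and rh j = rho_j.\<close>
fun Gm :: "(nat \<Rightarrow> 'a::comm_ring_1) \<Rightarrow> nat \<Rightarrow> nat \<Rightarrow> nat \<Rightarrow> nat \<Rightarrow> 'a" where
  "Gm rh N 0 i c = 0"
| "Gm rh N (Suc 0) i c = rh c"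
| "Gm rh N (Suc (Suc k)) i c =
     (if i = 0 then rh (c div N ^ Suc k) else Gm rh N (Suc k) (i - 1) (c mod N ^ Suc k))"

definition S_mod :: "'a::{comm_ring_1,finite} list \<Rightarrow> 'a \<Rightarrow> nat \<Rightarrow> nat \<Rightarrow> 'a list set" where
  "S_mod T g s k = {map (\<lambda>c. \<Sum>i<k. a i * Gm (rho T g s) (resq g ^ s) k i c) [0..<resq g ^ (s * k)]
                    | a. True}"

text \<open>The m-th vector v in F_q^{s-1} (m < q^{s-1}), component i, via representatives in T.\<close>
definition fq_vec :: "'a list \<Rightarrow> nat \<Rightarrow> nat \<Rightarrow> nat \<Rightarrow> 'a" where
  "fq_vec T q m i = T ! ((m div q ^ i) mod q)"

text \<open>Phi_R(r) = (rbar_0,...,rbar_{s-1}) M, the column of M with index m being (v_m, 1).\<close>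
definition gray_R :: "'a::{comm_ring_1,finite} list \<Rightarrow> 'a \<Rightarrow> nat \<Rightarrow> 'a \<Rightarrow> 'a set list" where
  "gray_R T g s r = (let d = digits T g s r; q = resq g in
     map (\<lambda>m. residue g ((\<Sum>i<s - 1. d ! i * fq_vec T q m i) + d ! (s - 1))) [0..<q ^ (s - 1)])"

definition gray :: "'a::{comm_ring_1,finite} list \<Rightarrow> 'a \<Rightarrow> nat \<Rightarrow> 'a list \<Rightarrow> 'a set list" where
  "gray T g s x = concat (map (gray_R T g s) x)"

definition hwt :: "'b \<Rightarrow> 'b list \<Rightarrow> nat" where
  "hwt z c = card {i. i < length c \<and> c ! i \<noteq> z}"

definition hdist :: "'b list \<Rightarrow> 'b list \<Rightarrow> nat" where
  "hdist c d = card {i. i < length c \<and> c ! i \<noteq> d ! i}"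

definition min_dist :: "'b list set \<Rightarrow> nat" where
  "min_dist C = Min {hdist c d | c d. c \<in> C \<and> d \<in> C \<and> c \<noteq> d}"

definition weight_enum :: "'b \<Rightarrow> 'b list set \<Rightarrow> nat \<Rightarrow> real \<Rightarrow> real \<Rightarrow> real" where
  "weight_enum z C n X Y = (\<Sum>i\<le>n. real (card {c \<in> C. hwt z c = i}) * X ^ (n - i) * Y ^ i)"

end

theory Submission
  imports Defs
begin

locale cr =
  fixes g :: "'a::{comm_ring_1,finite}" and T :: "'a list" and s :: nat
  assumes chain: "chain_ring TYPE('a)"
    and maxg: "is_maximal_ideal (principal_ideal g)"
    and s_nil: "g ^ s = 0" and s_least: "\<forall>i<s. g ^ i \<noteq> 0"
    and T_dist: "distinct T"
    and T_reps: "\<forall>r. \<exists>!e. e \<in> set T \<and> residue g e = residue g r"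
    and T0: "T ! 0 = 0"
begin

abbreviation PI where "PI \<equiv> principal_ideal g"
abbreviation q where "q \<equiv> resq g"

lemma PI_iff: "x \<in> PI \<longleftrightarrow> (\<exists>t. x = t * g)"
  by (auto simp: principal_ideal_def)

lemma residue_eq_iff: "residue g a = residue g b \<longleftrightarrow> a - b \<in> PI"
proof
  assume h: "residue g a = residue g b"
  have "a \<in> residue g a" unfolding residue_def by (rule CollectI, rule exI[of _ 0]) simp
  then have "a \<in> residue g b" using h by simp
  then have "\<exists>t. a = b + t * g" unfolding residue_def by simp
  then obtain t where "a = b + t * g" by blast
  then have "a - b = t * g" by simp
  then show "a - b \<in> PI" by (auto simp: PI_iff)
next
  assume "a - b \<in> PI"
  then obtain t where t: "a - b = t * g" by (auto simp: PI_iff)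
  then have ta: "a = t * g + b" by (simp add: diff_eq_eq)
  show "residue g a = residue g b" unfolding residue_def
  proof (intro set_eqI iffI)
    fix x assume "x \<in> {a + u * g |u. True}"
    then obtain u where "x = a + u * g" by blast
    then have "x = b + (t + u) * g" by (simp add: ta distrib_right add_ac)
    then show "x \<in> {b + u * g |u. True}" by blast
  next
    fix x assume "x \<in> {b + u * g |u. True}"
    then obtain u where "x = b + u * g" by blast
    then have "x = a + (u - t) * g" by (simp add: ta left_diff_distrib add_ac)
    then show "x \<in> {a + u * g |u. True}" by blast
  qed
qed

lemma PI_ideal_ops:
  "0 \<in> PI" "x \<in> PI \<Longrightarrow> y \<in> PI \<Longrightarrow> x + y \<in> PI" "x \<in> PI \<Longrightarrow> r * x \<in> PI"
  "x \<in> PI \<Longrightarrow> y \<in> PI \<Longrightarrow> x - y \<in> PI" "x \<in> PI \<Longrightarrow> - x \<in> PI" "x \<in> PI \<Longrightarrow> x * r \<in> PI"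
  "g \<in> PI" "g * r \<in> PI"
proof -
  show "0 \<in> PI" unfolding PI_iff by (rule exI[of _ 0]) simp
  show "g \<in> PI" unfolding PI_iff by (rule exI[of _ 1]) simp
  show "g * r \<in> PI" unfolding PI_iff by (rule exI[of _ r]) (simp add: mult.commute)
  assume x: "x \<in> PI"
  then obtain a where a: "x = a * g" unfolding PI_iff by blast
  show "r * x \<in> PI" unfolding PI_iff by (rule exI[of _ "r * a"]) (simp add: a mult.assoc)
  show "x * r \<in> PI" unfolding PI_iff by (rule exI[of _ "r * a"]) (simp add: a mult.assoc mult.commute mult.left_commute)
  show "- x \<in> PI" unfolding PI_iff by (rule exI[of _ "- a"]) (simp add: a)
  {assume "y \<in> PI"
  then obtain b where b: "y = b * g" unfolding PI_iff by blast
  show "x + y \<in> PI" unfolding PI_iff by (rule exI[of _ "a + b"]) (simp add: a b distrib_right)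
  show "x - y \<in> PI" unfolding PI_iff by (rule exI[of _ "a - b"]) (simp add: a b left_diff_distrib)}
qed

lemma is_ideal_principal: "is_ideal (principal_ideal (x::'a))"
  unfolding is_ideal_def
proof (intro conjI ballI allI)
  show "0 \<in> principal_ideal x" unfolding principal_ideal_def by (auto intro: exI[of _ 0])
next
  fix y z assume "y \<in> principal_ideal x" "z \<in> principal_ideal x"
  then obtain a b where "y = a * x" "z = b * x" unfolding principal_ideal_def by blast
  then have "y + z = (a + b) * x" by (simp add: distrib_right)
  then show "y + z \<in> principal_ideal x" unfolding principal_ideal_def by blast
next
  fix r y assume "y \<in> principal_ideal x"
  then obtain a where "y = a * x" unfolding principal_ideal_def by blast
  then have "r * y = (r * a) * x" by (simp add: mult.assoc)
  then show "r * y \<in> principal_ideal x" unfolding principal_ideal_def by blast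
qed

lemma one_notin_PI: "1 \<notin> PI"
proof
  assume h: "1 \<in> PI"
  have "x \<in> PI" for x using PI_ideal_ops(3)[OF h, of x] by simp
  then have "PI = UNIV" by blast
  then show False using maxg unfolding is_maximal_ideal_def by simp
qed

lemma unit_of_notin: assumes "x \<notin> PI" shows "\<exists>y. x * y = 1"
proof -
  let ?J = "principal_ideal x"
  have xJ: "x \<in> ?J" unfolding principal_ideal_def by (auto intro: exI[of _ 1])
  have c: "\<forall>I J :: 'a set. is_ideal I \<and> is_ideal J \<longrightarrow> I \<subseteq> J \<or> J \<subseteq> I"
    using chain unfolding chain_ring_def by simp
  have i1: "is_ideal ?J" "is_ideal PI" by (rule is_ideal_principal)+
  have "?J \<subseteq> PI \<or> PI \<subseteq> ?J" using c i1 by blast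
  then have "PI \<subseteq> ?J" using xJ assms by blast
  moreover have m: "\<forall>J. is_ideal J \<and> PI \<subseteq> J \<longrightarrow> J = PI \<or> J = UNIV"
    using maxg unfolding is_maximal_ideal_def by simp
  ultimately have "?J = PI \<or> ?J = UNIV" using i1 by blast
  then have "?J = UNIV" using xJ assms by blast
  then have "1 \<in> ?J" by simp
  then obtain r where "1 = r * x" unfolding principal_ideal_def by blast
  then show ?thesis by (metis mult.commute)
qed

lemma s_pos: "s \<ge> 1"
proof (rule ccontr)
  assume "\<not> s \<ge> 1" then have "s = 0" by simp
  then show False using s_nil by simp
qed

lemma unit_cancel: fixes u v a :: 'a assumes "u * v = 1" "a * u = 0" shows "a = 0"
proof -
  have "a = a * (u * v)" using assms(1) by (simp only: mult_1_right)
  also have "\<dots> = (a * u) * v" by (simp only: mult.assoc)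
  finally show ?thesis using assms(2) by simp
qed

lemma T_residue_inj: assumes "e \<in> set T" "e' \<in> set T" "e - e' \<in> PI" shows "e = e'"
proof -
  have h: "residue g e = residue g e'" using assms(3) residue_eq_iff by simp
  have "\<exists>!x. x \<in> set T \<and> residue g x = residue g e'" using T_reps by blast
  then show ?thesis using h assms(1,2) by blast
qed

lemma T_rep_ex: "\<exists>e\<in>set T. r - e \<in> PI"
proof -
  obtain e where "e \<in> set T" "residue g e = residue g r" using T_reps by blast
  then have "e \<in> set T" "e - r \<in> PI" using residue_eq_iff by auto
  moreover have "r - e = - (e - r)" by simp
  ultimately show ?thesis using PI_ideal_ops(5) by metis
qed

lemma lenT: "length T = q"
proof -
  have "inj_on (residue g) (set T)"
  proof (rule inj_onI)
    fix x y assume "x \<in> set T" "y \<in> set T" "residue g x = residue g y"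
    then show "x = y" using T_residue_inj residue_eq_iff by simp
  qed
  moreover have "residue g ` set T = residue g ` UNIV"
  proof
    show "residue g ` UNIV \<subseteq> residue g ` set T"
    proof
      fix x assume "x \<in> residue g ` UNIV"
      then obtain r where r: "x = residue g r" by blast
      obtain e where "e \<in> set T" "residue g e = residue g r" using T_reps by blast
      then show "x \<in> residue g ` set T" using r by (metis image_eqI)
    qed
  qed auto
  ultimately have "card (set T) = q" unfolding resq_def using card_image by metis
  then show ?thesis using T_dist distinct_card by metis
qed

lemma q_ge2: "q \<ge> 2"
proof -
  have "1 - 0 \<notin> PI" using one_notin_PI by simp
  then have "residue g 1 \<noteq> residue g 0" using residue_eq_iff by blast
  then have "card {residue g 0, residue g 1} = 2" by simp
  moreover have "{residue g 0, residue g 1} \<subseteq> residue g ` UNIV" by auto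
  moreover have "finite (residue g ` UNIV)" by simp
  ultimately show ?thesis unfolding resq_def using card_mono by metis
qed

lemma zero_in_T: "0 \<in> set T"
proof -
  have "0 < length T" using lenT q_ge2 by simp
  then have "T ! 0 \<in> set T" by (rule nth_mem)
  then show ?thesis using T0 by simp
qed

end


primrec evl :: "'a::comm_ring_1 \<Rightarrow> 'a list \<Rightarrow> 'a" where
  "evl g [] = 0"
| "evl g (d # ds) = d + g * evl g ds"

lemma evl_sum: "evl g ds = (\<Sum>i<length ds. ds ! i * g ^ i)"
proof (induction ds)
  case Nil then show ?case by simp
next
  case (Cons d ds)
  have "(\<Sum>i<length (d # ds). (d # ds) ! i * g ^ i) = (d # ds) ! 0 * g ^ 0 + (\<Sum>i<length ds. (d # ds) ! Suc i * g ^ Suc i)"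
    unfolding length_Cons by (rule sum.lessThan_Suc_shift)
  also have "\<dots> = d + (\<Sum>i<length ds. ds ! i * g ^ Suc i)" by simp
  also have "(\<Sum>i<length ds. ds ! i * g ^ Suc i) = g * (\<Sum>i<length ds. ds ! i * g ^ i)"
    by (simp add: sum_distrib_left mult_ac)
  finally show ?case using Cons by simp
qed

context cr begin

lemma valuation:
  fixes y :: 'a assumes "y \<noteq> 0"
  shows "\<exists>j<s. \<exists>u v. u * v = 1 \<and> y = g ^ j * u"
proof -
  define S where "S = {j. j \<le> s \<and> (\<exists>u. y = g ^ j * u)}"
  have fin: "finite S" unfolding S_def by simp
  have "0 \<in> S" unfolding S_def by simp
  then have ne: "S \<noteq> {}" by blast
  define j where "j = Max S"
  have jS: "j \<in> S" unfolding j_def using fin ne by (rule Max_in)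
  then obtain u where u: "y = g ^ j * u" and js: "j \<le> s" unfolding S_def by blast
  have "j \<noteq> s" using u s_nil assms by auto
  then have jl: "j < s" using js by simp
  have "u \<notin> PI"
  proof
    assume "u \<in> PI"
    then obtain t where "u = t * g" unfolding PI_iff by blast
    then have "y = g ^ Suc j * t" using u by (simp add: mult_ac)
    then have "Suc j \<in> S" unfolding S_def using jl by auto
    then have "Suc j \<le> j" unfolding j_def by (rule Max_ge[OF fin])
    then show False by simp
  qed
  then obtain v where "u * v = 1" using unit_of_notin by blast
  then show ?thesis using jl u by blast
qed

lemma ann_g:
  fixes z :: 'a assumes "g * z = 0" shows "\<exists>t. z = g ^ (s - 1) * t"
proof (cases "z = 0")
  case True then show ?thesis by (auto intro: exI[of _ 0])
next
  case False
  then obtain j u v where j: "j < s" "u * v = 1" "z = g ^ j * u" using valuation by blast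
  then have "g ^ Suc j * u = 0" using assms by (simp add: mult.assoc)
  then have "g ^ Suc j = 0" using unit_cancel j(2) by blast
  then have "\<not> Suc j < s" using s_least by blast
  then have "j = s - 1" using j(1) by simp
  then show ?thesis using j(3) by blast
qed

lemma pow_dvd_shift:
  fixes z :: 'a assumes "m \<le> s - 1" shows "g ^ (s - 1) * z = g ^ m * (g ^ (s - 1 - m) * z)"
proof -
  have "s - 1 = m + (s - 1 - m)" using assms by simp
  then have "g ^ (s - 1) = g ^ m * g ^ (s - 1 - m)" by (metis power_add)
  then show ?thesis by (simp add: mult.assoc)
qed

lemma digit_exists:
  "\<exists>ds. length ds = n \<and> set ds \<subseteq> set T \<and> (\<exists>t. r - evl g ds = g ^ n * t)"
proof (induction n arbitrary: r)
  case 0 show ?case by (rule exI[of _ "[]"]) simp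
next
  case (Suc n)
  obtain e where e: "e \<in> set T" "r - e \<in> PI" using T_rep_ex by blast
  then obtain t where t: "r - e = t * g" unfolding PI_iff by blast
  obtain ds t' where ds: "length ds = n" "set ds \<subseteq> set T" "t - evl g ds = g ^ n * t'"
    using Suc.IH[of t] by blast
  have "r - evl g (e # ds) = (r - e) - g * evl g ds" by (simp add: algebra_simps)
  also have "\<dots> = g * (t - evl g ds)" using t by (simp add: algebra_simps)
  also have "\<dots> = g ^ Suc n * t'" using ds(3) by (simp add: mult.assoc)
  finally show ?case using ds e by (intro exI[of _ "e # ds"]) auto
qed

lemma digit_uniq_gen:
  "length ds = n \<Longrightarrow> length es = n \<Longrightarrow> set ds \<subseteq> set T \<Longrightarrow> set es \<subseteq> set T \<Longrightarrow> n \<le> s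
   \<Longrightarrow> m \<le> n \<Longrightarrow> evl g ds - evl g es = g ^ m * t \<Longrightarrow> take m ds = take m es"
proof (induction ds arbitrary: n es m t)
  case Nil then show ?case by simp
next
  case (Cons d ds)
  obtain e es' where es: "es = e # es'" using Cons.prems(1,2) by (cases es) auto
  show ?case
  proof (cases m)
    case 0 then show ?thesis by simp
  next
    case (Suc m')
    let ?A = "evl g ds" and ?B = "evl g es'"
    have eq: "(d - e) + g * (?A - ?B) = g * (g ^ m' * t)"
      using Cons.prems(7) es Suc by (simp add: algebra_simps)
    then have "d - e = g * (g ^ m' * t - (?A - ?B))" by (simp add: algebra_simps)
    then have "d - e \<in> PI" unfolding PI_iff by (metis mult.commute)
    then have de: "d = e" using T_residue_inj Cons.prems(3,4) es by simp
    then have "g * (?A - ?B - g ^ m' * t) = 0" using eq by (simp add: algebra_simps)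
    then obtain t' where t': "?A - ?B - g ^ m' * t = g ^ (s - 1) * t'" using ann_g by blast
    have mle: "m' \<le> s - 1" using Cons.prems(5,6) Cons.prems(1) Suc by simp
    have "?A - ?B = g ^ m' * (t + g ^ (s - 1 - m') * t')"
      using t' pow_dvd_shift[OF mle, of t'] by (simp add: algebra_simps)
    then have "take m' ds = take m' es'"
      using Cons.IH[of "n - 1" es' m'] Cons.prems es Suc by auto
    then show ?thesis using de es Suc by simp
  qed
qed

definition dg :: "'a \<Rightarrow> 'a list" where "dg r = digits T g s r"

lemma digits_prop: "length (dg r) = s \<and> set (dg r) \<subseteq> set T \<and> evl g (dg r) = r"
proof -
  have ex: "\<exists>ds. length ds = s \<and> set ds \<subseteq> set T \<and> r = evl g ds"
  proof -
    obtain ds t where "length ds = s" "set ds \<subseteq> set T" "r - evl g ds = g ^ s * t"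
      using digit_exists by blast
    then show ?thesis using s_nil by (intro exI[of _ ds]) simp
  qed
  have un: "ds = es" if "length ds = s \<and> set ds \<subseteq> set T \<and> r = evl g ds"
      "length es = s \<and> set es \<subseteq> set T \<and> r = evl g es" for ds es
    using digit_uniq_gen[of ds s es s 0] that s_nil by auto
  have eqv: "(length ds = s \<and> set ds \<subseteq> set T \<and> r = (\<Sum>i<s. ds ! i * g ^ i)) \<longleftrightarrow>
     (length ds = s \<and> set ds \<subseteq> set T \<and> r = evl g ds)" for ds
    by (auto simp: evl_sum)
  have "\<exists>!ds. length ds = s \<and> set ds \<subseteq> set T \<and> r = (\<Sum>i<s. ds ! i * g ^ i)"
    unfolding eqv using ex un by blast
  then have "length (dg r) = s \<and> set (dg r) \<subseteq> set T \<and> r = (\<Sum>i<s. dg r ! i * g ^ i)"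
    unfolding dg_def digits_def by (rule theI')
  then have "length (dg r) = s \<and> set (dg r) \<subseteq> set T \<and> r = evl g (dg r)"
    using eqv by blast
  then show ?thesis by simp
qed

lemma dg_len[simp]: "length (dg r) = s" using digits_prop by blast
lemma dg_set: "set (dg r) \<subseteq> set T" using digits_prop by blast
lemma dg_evl[simp]: "evl g (dg r) = r" using digits_prop by blast
lemma dg_nth_T: "i < s \<Longrightarrow> dg r ! i \<in> set T" using dg_set[of r] by (metis dg_len nth_mem subsetD)

lemma dg_eq: assumes "length ds = s" "set ds \<subseteq> set T" "evl g ds = r" shows "dg r = ds"
  using digit_uniq_gen[of "dg r" s ds s 0] assms dg_set[of r] by auto

lemma dg_inj: "dg u = dg w \<Longrightarrow> u = w" by (metis dg_evl)

lemma dg_zero: "dg 0 = replicate s 0"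
proof (rule dg_eq)
  show "set (replicate s (0::'a)) \<subseteq> set T" using zero_in_T by auto
  have "evl g (replicate n 0) = 0" for n by (induction n) auto
  then show "evl g (replicate s 0) = 0" .
qed simp

lemma evl_diff_last:
  assumes "length ds = s" "length es = s" "\<forall>i<s - 1. ds ! i = es ! i"
  shows "evl g ds - evl g es = g ^ (s - 1) * (ds ! (s - 1) - es ! (s - 1))"
proof -
  have ss: "s = Suc (s - 1)" using s_pos by simp
  have "evl g ds - evl g es = (\<Sum>i<s. (ds ! i - es ! i) * g ^ i)"
    unfolding evl_sum assms(1,2) by (simp add: sum_subtractf left_diff_distrib)
  also have "\<dots> = (\<Sum>i<s - 1. (ds ! i - es ! i) * g ^ i) + (ds ! (s - 1) - es ! (s - 1)) * g ^ (s - 1)"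
    by (subst ss, subst sum.lessThan_Suc) simp
  also have "(\<Sum>i<s - 1. (ds ! i - es ! i) * g ^ i) = 0" using assms(3) by simp
  finally show ?thesis by (simp add: mult.commute)
qed

lemma dg_close: "(\<exists>t. u - w = g ^ (s - 1) * t) \<longleftrightarrow> (\<forall>i<s - 1. dg u ! i = dg w ! i)"
proof
  assume "\<exists>t. u - w = g ^ (s - 1) * t"
  then obtain t where t: "evl g (dg u) - evl g (dg w) = g ^ (s - 1) * t" by auto
  have "take (s - 1) (dg u) = take (s - 1) (dg w)"
    by (rule digit_uniq_gen[OF dg_len dg_len dg_set dg_set _ _ t]) auto
  then show "\<forall>i<s - 1. dg u ! i = dg w ! i" by (metis nth_take)
next
  assume "\<forall>i<s - 1. dg u ! i = dg w ! i"
  then have "evl g (dg u) - evl g (dg w) = g ^ (s - 1) * (dg u ! (s - 1) - dg w ! (s - 1))"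
    by (intro evl_diff_last) auto
  then show "\<exists>t. u - w = g ^ (s - 1) * t" by auto
qed

lemma card_UNIV_q: "card (UNIV :: 'a set) = q ^ s"
proof -
  have "bij_betw dg UNIV {ds. set ds \<subseteq> set T \<and> length ds = s}"
  proof (rule bij_betwI')
    show "\<And>x y. (dg x = dg y) = (x = y)" using dg_inj by blast
    show "\<And>x. dg x \<in> {ds. set ds \<subseteq> set T \<and> length ds = s}" using dg_set by simp
    show "\<And>y. y \<in> {ds. set ds \<subseteq> set T \<and> length ds = s} \<Longrightarrow> \<exists>x\<in>UNIV. y = dg x"
      using dg_eq by (metis (mono_tags, lifting) UNIV_I mem_Collect_eq)
  qed
  then have "card (UNIV :: 'a set) = card {ds. set ds \<subseteq> set T \<and> length ds = s}"
    by (rule bij_betw_same_card)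
  also have "\<dots> = card (set T) ^ s" by (rule card_lists_length_eq) simp
  also have "card (set T) = q" using lenT T_dist distinct_card by metis
  finally show ?thesis .
qed

end


context cr begin

lemma tidx_prop: assumes "e \<in> set T" shows "tidx T e < length T \<and> T ! tidx T e = e"
proof -
  have "\<exists>!j. j < length T \<and> T ! j = e" using distinct_Ex1[OF T_dist assms] .
  then show ?thesis unfolding tidx_def by (rule theI')
qed

lemma tidx_inj: "e \<in> set T \<Longrightarrow> e' \<in> set T \<Longrightarrow> tidx T e = tidx T e' \<Longrightarrow> e = e'"
  using tidx_prop by metis

abbreviation lt where "lt \<equiv> R_less T g s"
abbreviation ti where "ti r i \<equiv> tidx T (dg r ! i)"

lemma lt_def': "lt x y \<longleftrightarrow> (\<exists>i<s. ti x i < ti y i \<and> (\<forall>j. i < j \<and> j < s \<longrightarrow> dg x ! j = dg y ! j))"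
  unfolding R_less_def dg_def by simp

lemma lt_irrefl: "\<not> lt x x" unfolding lt_def' by auto

lemma lt_trans: assumes "lt x y" "lt y z" shows "lt x z"
proof -
  obtain i where i: "i < s" "ti x i < ti y i" "\<forall>j. i < j \<and> j < s \<longrightarrow> dg x ! j = dg y ! j"
    using assms(1) unfolding lt_def' by blast
  obtain k where k: "k < s" "ti y k < ti z k" "\<forall>j. k < j \<and> j < s \<longrightarrow> dg y ! j = dg z ! j"
    using assms(2) unfolding lt_def' by blast
  consider "i = k" | "i < k" | "k < i" by linarith
  then show ?thesis
  proof cases
    case 1 then show ?thesis unfolding lt_def' using i k
      by (intro exI[of _ i]) auto
  next
    case 2
    have "dg x ! k = dg y ! k" using i(3) 2 k(1) by blast
    then show ?thesis unfolding lt_def' using i k 2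
      by (intro exI[of _ k]) auto
  next
    case 3
    have "dg y ! i = dg z ! i" using k(3) 3 i(1) by blast
    then show ?thesis unfolding lt_def' using i k 3
      by (intro exI[of _ i]) auto
  qed
qed

lemma lt_total: assumes "x \<noteq> y" shows "lt x y \<or> lt y x"
proof -
  have "dg x \<noteq> dg y" using assms dg_inj by blast
  then have "\<exists>i<s. dg x ! i \<noteq> dg y ! i" using nth_equalityI[of "dg x" "dg y"] by auto
  then have ne: "{i. i < s \<and> dg x ! i \<noteq> dg y ! i} \<noteq> {}" by blast
  have fin: "finite {i. i < s \<and> dg x ! i \<noteq> dg y ! i}" by simp
  define i where "i = Max {i. i < s \<and> dg x ! i \<noteq> dg y ! i}"
  have "i \<in> {i. i < s \<and> dg x ! i \<noteq> dg y ! i}" unfolding i_def using fin ne by (rule Max_in)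
  then have i: "i < s" "dg x ! i \<noteq> dg y ! i" by auto
  have above: "\<forall>j. i < j \<and> j < s \<longrightarrow> dg x ! j = dg y ! j"
  proof (intro allI impI)
    fix j assume j: "i < j \<and> j < s"
    show "dg x ! j = dg y ! j"
    proof (rule ccontr)
      assume "dg x ! j \<noteq> dg y ! j"
      then have "j \<le> i" unfolding i_def using j by (intro Max_ge[OF fin]) auto
      then show False using j by simp
    qed
  qed
  have "ti x i \<noteq> ti y i" using tidx_inj dg_nth_T i by blast
  then have "ti x i < ti y i \<or> ti y i < ti x i" by linarith
  then show ?thesis unfolding lt_def' using i(1) above by metis
qed

definition rk :: "'a \<Rightarrow> nat" where "rk r = card {y. lt y r}"

lemma rk_less: "lt x y \<Longrightarrow> rk x < rk y"
  unfolding rk_def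
proof (rule psubset_card_mono)
  assume xy: "lt x y"
  show "{z. lt z x} \<subset> {z. lt z y}"
  proof
    show "{z. lt z x} \<subseteq> {z. lt z y}" using lt_trans xy by blast
    show "{z. lt z x} \<noteq> {z. lt z y}" using xy lt_irrefl by blast
  qed
qed simp

lemma rk_inj: "inj rk"
proof (rule injI)
  fix x y assume "rk x = rk y"
  then show "x = y" using rk_less lt_total by (metis less_irrefl)
qed

abbreviation NN where "NN \<equiv> q ^ s"

lemma rk_bound: "rk r < NN"
proof -
  have "{y. lt y r} \<subset> UNIV" using lt_irrefl by blast
  then have "card {y. lt y r} < card (UNIV :: 'a set)" by (rule psubset_card_mono[rotated]) simp
  then show ?thesis unfolding rk_def card_UNIV_q .
qed

lemma rk_bij: "bij_betw rk UNIV {0..<NN}"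
proof -
  have "rk ` UNIV \<subseteq> {0..<NN}" using rk_bound by auto
  moreover have "card (rk ` UNIV) = card {0..<NN}"
    using card_image[OF rk_inj] card_UNIV_q by simp
  ultimately have "rk ` UNIV = {0..<NN}" by (intro card_subset_eq) auto
  then show ?thesis using rk_inj unfolding bij_betw_def by blast
qed

abbreviation rh where "rh \<equiv> rho T g s"

lemma rk_rho: assumes "j < NN" shows "rk (rh j) = j"
proof -
  have "j \<in> rk ` UNIV" using rk_bij assms unfolding bij_betw_def by auto
  then have "\<exists>!r. rk r = j" using rk_inj unfolding inj_def by blast
  then have "rk (THE r. rk r = j) = j" by (rule theI')
  then show ?thesis unfolding rho_def rk_def by simp
qed

lemma rho_bij: "bij_betw rh {0..<NN} UNIV"
proof (rule bij_betwI')
  show "\<And>x y. x \<in> {0..<NN} \<Longrightarrow> y \<in> {0..<NN} \<Longrightarrow> (rh x = rh y) = (x = y)"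
    using rk_rho by (metis atLeastLessThan_iff)
  show "\<And>x. x \<in> {0..<NN} \<Longrightarrow> rh x \<in> UNIV" by simp
  show "\<And>y. y \<in> UNIV \<Longrightarrow> \<exists>x\<in>{0..<NN}. y = rh x"
  proof -
    fix y :: 'a
    have "rk (rh (rk y)) = rk y" using rk_rho rk_bound by blast
    then have "rh (rk y) = y" using rk_inj unfolding inj_def by blast
    moreover have "rk y \<in> {0..<NN}" using rk_bound by simp
    ultimately show "\<exists>x\<in>{0..<NN}. y = rh x" by metis
  qed
qed

end


lemma sum_ivl_shift0: "(\<Sum>i\<in>{a..<a + k}. f i) = (\<Sum>j<k. f (a + j))"
  for f :: "nat \<Rightarrow> 'b::comm_monoid_add"
proof (induction k)
  case 0 then show ?case by simp
next
  case (Suc k)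
  have "{a..<a + Suc k} = insert (a + k) {a..<a + k}" by auto
  then show ?case using Suc by (simp add: add.commute)
qed

lemma sum_split: "(\<Sum>m<Q * k. f m) = (\<Sum>m'<Q. \<Sum>j<k. f (m' * k + j))"
  for f :: "nat \<Rightarrow> 'b::comm_monoid_add"
proof -
  have "(\<Sum>m<Q * k. f m) = (\<Sum>m<Q. \<Sum>i\<in>{m * k..<m * k + k}. f i)" by (rule sum.nat_group[symmetric])
  also have "\<dots> = (\<Sum>m'<Q. \<Sum>j<k. f (m' * k + j))" by (simp only: sum_ivl_shift0)
  finally show ?thesis .
qed

lemma card_filter: fixes N :: nat shows "card {m. m < N \<and> P m} = (\<Sum>m<N. if P m then 1 else 0)"
proof -
  have "{m. m < N \<and> P m} = {m \<in> {..<N}. P m}" by auto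
  then have "card {m. m < N \<and> P m} = (\<Sum>m\<in>{m \<in> {..<N}. P m}. 1)" by (simp only: card_eq_sum)
  also have "\<dots> = (\<Sum>m<N. if P m then 1 else 0)" by (rule sum.inter_filter) simp
  finally show ?thesis .
qed

lemma card_split: fixes Q k :: nat shows "card {m. m < Q * k \<and> P m} = (\<Sum>m'<Q. card {j. j < k \<and> P (m' * k + j)})"
  unfolding card_filter by (rule sum_split)

lemma card_split': fixes Q k :: nat shows "card {m. m < Q * k \<and> P m} = (\<Sum>j<k. card {m'. m' < Q \<and> P (m' * k + j)})"
  unfolding card_filter sum_split by (rule sum.swap)

lemma dig_split:
  fixes q m' j :: nat assumes "j < q"
  shows "(m' * q + j) mod q = j" "(m' * q + j) div q ^ Suc i mod q = m' div q ^ i mod q"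
proof -
  show "(m' * q + j) mod q = j" using assms by simp
  have "(m' * q + j) div q = m'" using assms by simp
  moreover have "(m' * q + j) div q ^ Suc i = (m' * q + j) div q div q ^ i"
    by (simp add: div_mult2_eq)
  ultimately show "(m' * q + j) div q ^ Suc i mod q = m' div q ^ i mod q" by simp
qed

context cr begin

definition FF :: "nat \<Rightarrow> (nat \<Rightarrow> 'a) \<Rightarrow> nat \<Rightarrow> 'a" where
  "FF n \<delta> m = (\<Sum>i<n. \<delta> i * fq_vec T q m i)"

lemma FF_split: assumes "j < q"
  shows "FF (Suc n) \<delta> (m' * q + j) = \<delta> 0 * T ! j + FF n (\<lambda>i. \<delta> (Suc i)) m'"
proof -
  have "FF (Suc n) \<delta> (m' * q + j) = \<delta> 0 * fq_vec T q (m' * q + j) 0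
      + (\<Sum>i<n. \<delta> (Suc i) * fq_vec T q (m' * q + j) (Suc i))"
    unfolding FF_def by (rule sum.lessThan_Suc_shift)
  moreover have "fq_vec T q (m' * q + j) 0 = T ! j" unfolding fq_vec_def using assms by simp
  moreover have "fq_vec T q (m' * q + j) (Suc i) = fq_vec T q m' i" for i
    unfolding fq_vec_def using dig_split(2)[OF assms, of m' i] by simp
  ultimately show ?thesis unfolding FF_def by simp
qed

lemma FF_shift: assumes "j < q"
  shows "(FF (Suc n) \<delta> (m' * q + j) + c \<in> PI) = (\<delta> 0 * T ! j + (FF n (\<lambda>i. \<delta> (Suc i)) m' + c) \<in> PI)"
    "(FF (Suc n) \<delta> (m' * q + j) + c \<in> PI) = (FF n (\<lambda>i. \<delta> (Suc i)) m' + (\<delta> 0 * T ! j + c) \<in> PI)"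
proof -
  have "FF (Suc n) \<delta> (m' * q + j) + c = (\<delta> 0 * T ! j + FF n (\<lambda>i. \<delta> (Suc i)) m') + c"
    by (simp only: FF_split[OF assms])
  then show "(FF (Suc n) \<delta> (m' * q + j) + c \<in> PI) = (\<delta> 0 * T ! j + (FF n (\<lambda>i. \<delta> (Suc i)) m' + c) \<in> PI)"
    "(FF (Suc n) \<delta> (m' * q + j) + c \<in> PI) = (FF n (\<lambda>i. \<delta> (Suc i)) m' + (\<delta> 0 * T ! j + c) \<in> PI)"
    by (simp_all add: ac_simps)
qed

lemma PI_sum: "(\<And>i. i \<in> A \<Longrightarrow> f i \<in> PI) \<Longrightarrow> sum f A \<in> PI"
proof (induction A rule: infinite_finite_induct)
  case (infinite A) then show ?case using PI_ideal_ops(1) by simp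
next
  case empty then show ?case using PI_ideal_ops(1) by simp
next
  case (insert x F) then show ?case using PI_ideal_ops(2) by simp
qed

lemma FF_in_PI: "(\<forall>i<n. \<delta> i \<in> PI) \<Longrightarrow> FF n \<delta> m \<in> PI"
  unfolding FF_def by (rule PI_sum) (simp add: PI_ideal_ops(6))

lemma unique_j: assumes "d \<notin> PI" shows "card {j. j < q \<and> d * T ! j + C \<in> PI} = 1"
proof -
  obtain v where v: "d * v = 1" using unit_of_notin assms by blast
  obtain e where e: "e \<in> set T" "(- C * v) - e \<in> PI" using T_rep_ex by blast
  obtain j0 where j0: "j0 < q" "T ! j0 = e" using e(1) lenT by (metis in_set_conv_nth)
  have dc: "d * (- C * v) = - C * (d * v)" by (simp only: mult.left_commute)
  have "d * e + C = - (d * ((- C * v) - e))"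
    using v dc by (simp add: right_diff_distrib)
  moreover have "- (d * ((- C * v) - e)) \<in> PI" using e(2) PI_ideal_ops(3,5) by blast
  ultimately have "d * T ! j0 + C \<in> PI" using j0 by simp
  moreover have "j = j0" if "j < q" "d * T ! j + C \<in> PI" for j
  proof -
    have "(d * T ! j + C) - (d * T ! j0 + C) \<in> PI"
      using that(2) \<open>d * T ! j0 + C \<in> PI\<close> PI_ideal_ops(4) by blast
    moreover have "(d * T ! j + C) - (d * T ! j0 + C) = d * (T ! j - T ! j0)" by (simp add: right_diff_distrib)
    ultimately have "d * (T ! j - T ! j0) \<in> PI" by simp
    then have "v * (d * (T ! j - T ! j0)) \<in> PI" by (rule PI_ideal_ops(3))
    moreover have "v * (d * (T ! j - T ! j0)) = (d * v) * (T ! j - T ! j0)"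
      by (simp only: mult.assoc mult.commute mult.left_commute)
    ultimately have "T ! j - T ! j0 \<in> PI" using v by simp
    moreover have "T ! j \<in> set T" "T ! j0 \<in> set T" using that(1) j0(1) lenT by simp_all
    ultimately have "T ! j = T ! j0" using T_residue_inj by blast
    then show "j = j0" using nth_eq_iff_index_eq[OF T_dist] that(1) j0(1) lenT by simp
  qed
  ultimately have "{j. j < q \<and> d * T ! j + C \<in> PI} = {j0}" using j0(1) by blast
  then show ?thesis by simp
qed

lemma count_gen:
  "(\<exists>i<n. \<delta> i \<notin> PI) \<Longrightarrow> card {m. m < q ^ n \<and> FF n \<delta> m + c \<in> PI} = q ^ (n - 1)"
proof (induction n arbitrary: \<delta> c)
  case 0 then show ?case by simp
next
  case (Suc n)
  let ?d' = "\<lambda>i. \<delta> (Suc i)"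
  have eq: "card {m. m < q ^ Suc n \<and> FF (Suc n) \<delta> m + c \<in> PI}
      = card {m. m < q ^ n * q \<and> FF (Suc n) \<delta> m + c \<in> PI}" by (simp add: mult.commute)
  show ?case
  proof (cases "\<delta> 0 \<in> PI")
    case False
    have "card {m. m < q ^ n * q \<and> FF (Suc n) \<delta> m + c \<in> PI}
        = (\<Sum>m'<q ^ n. card {j. j < q \<and> FF (Suc n) \<delta> (m' * q + j) + c \<in> PI})"
      by (rule card_split)
    also have "\<dots> = (\<Sum>m'<q ^ n. card {j. j < q \<and> \<delta> 0 * T ! j + (FF n ?d' m' + c) \<in> PI})"
      by (intro sum.cong refl arg_cong[where f = card] Collect_cong conj_cong) (auto simp: FF_shift(1))
    also have "\<dots> = (\<Sum>m'<q ^ n. 1)" using unique_j[OF False] by simp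
    finally show ?thesis using eq by simp
  next
    case True
    then obtain i where i: "i < n" "?d' i \<notin> PI" using Suc.prems
      by (metis less_Suc_eq_0_disj)
    then have n1: "n \<ge> 1" by simp
    have "card {m. m < q ^ n * q \<and> FF (Suc n) \<delta> m + c \<in> PI}
        = (\<Sum>j<q. card {m'. m' < q ^ n \<and> FF (Suc n) \<delta> (m' * q + j) + c \<in> PI})"
      by (rule card_split')
    also have "\<dots> = (\<Sum>j<q. card {m'. m' < q ^ n \<and> FF n ?d' m' + (\<delta> 0 * T ! j + c) \<in> PI})"
      by (intro sum.cong refl arg_cong[where f = card] Collect_cong conj_cong) (auto simp: FF_shift(2))
    also have "\<dots> = (\<Sum>j<q. q ^ (n - 1))"
    proof (rule sum.cong[OF refl])
      fix j show "card {m'. m' < q ^ n \<and> FF n ?d' m' + (\<delta> 0 * T ! j + c) \<in> PI} = q ^ (n - 1)"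
        using Suc.IH[of ?d' "\<delta> 0 * T ! j + c"] i by blast
    qed
    also have "\<dots> = q ^ n" using n1 by (simp add: power_eq_if)
    finally show ?thesis using eq by simp
  qed
qed

end


lemma card_compl_filter: fixes Q :: nat
  shows "card {m. m < Q \<and> \<not> P m} = Q - card {m. m < Q \<and> P m}"
proof -
  have "{m. m < Q \<and> \<not> P m} = {..<Q} - {m. m < Q \<and> P m}" by auto
  moreover have "{m. m < Q \<and> P m} \<subseteq> {..<Q}" by auto
  ultimately show ?thesis by (simp add: card_Diff_subset)
qed

lemma hdist_append: assumes "length a = length c"
  shows "hdist (a @ b) (c @ d) = hdist a c + hdist b d"
proof -
  let ?A = "{i. i < length a \<and> a ! i \<noteq> c ! i}"
  let ?B = "{i. i < length b \<and> b ! i \<noteq> d ! i}"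
  have "{i. i < length (a @ b) \<and> (a @ b) ! i \<noteq> (c @ d) ! i} = ?A \<union> (\<lambda>i. i + length a) ` ?B"
  proof (rule set_eqI)
    fix i
    show "i \<in> {i. i < length (a @ b) \<and> (a @ b) ! i \<noteq> (c @ d) ! i} \<longleftrightarrow> i \<in> ?A \<union> (\<lambda>i. i + length a) ` ?B"
    proof (cases "i < length a")
      case True
      have "i \<notin> (\<lambda>j. j + length a) ` ?B" using True by auto
      moreover have "(a @ b) ! i = a ! i" "(c @ d) ! i = c ! i" using True assms by (simp_all add: nth_append)
      ultimately show ?thesis using True by simp
    next
      case False
      then have ii: "i = (i - length a) + length a" by simp
      have img: "i \<in> (\<lambda>j. j + length a) ` ?B \<longleftrightarrow> (i - length a) \<in> ?B"
      proof
        assume "i \<in> (\<lambda>j. j + length a) ` ?B"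
        then obtain j where "j \<in> ?B" "i = j + length a" by blast
        then show "(i - length a) \<in> ?B" by simp
      next
        assume "(i - length a) \<in> ?B"
        then show "i \<in> (\<lambda>j. j + length a) ` ?B" using ii by (rule rev_image_eqI)
      qed
      have "i \<notin> ?A" using False by simp
      moreover have "(a @ b) ! i = b ! (i - length a)" "(c @ d) ! i = d ! (i - length a)"
        using False assms by (simp_all add: nth_append)
      moreover have "i < length (a @ b) \<longleftrightarrow> i - length a < length b" using False by auto
      ultimately show ?thesis using img False by simp
    qed
  qed
  moreover have "?A \<inter> (\<lambda>i. i + length a) ` ?B = {}" by auto
  moreover have "card ((\<lambda>i. i + length a) ` ?B) = card ?B" by (rule card_image) (simp add: inj_on_def)
  ultimately show ?thesis unfolding hdist_def by (simp add: card_Un_disjoint)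
qed

context cr begin

definition E :: "'a \<Rightarrow> nat" where
  "E r = (if r = 0 then 0 else if (\<exists>t. r = g ^ (s - 1) * t) then q ^ (s - 1) else q ^ (s - 1) - q ^ (s - 2))"

lemma E_pos: assumes "r \<noteq> 0" shows "E r > 0"
proof (cases "\<exists>t. r = g ^ (s - 1) * t")
  case True then show ?thesis using assms q_ge2 unfolding E_def by simp
next
  case False
  have "s \<noteq> 1"
  proof
    assume "s = 1" then have "r = g ^ (s - 1) * r" by simp
    then show False using False by blast
  qed
  then have "s - 2 < s - 1" using s_pos by simp
  then have "q ^ (s - 2) < q ^ (s - 1)" using q_ge2 by (intro power_strict_increasing) auto
  then show ?thesis using assms False unfolding E_def by simp
qed

lemma E_zero[simp]: "E 0 = 0" unfolding E_def by simp

lemma gray_R_len[simp]: "length (gray_R T g s r) = q ^ (s - 1)"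
  unfolding gray_R_def Let_def by simp

lemma gray_R_nth: "m < q ^ (s - 1) \<Longrightarrow>
    gray_R T g s r ! m = residue g (FF (s - 1) (\<lambda>i. dg r ! i) m + dg r ! (s - 1))"
  unfolding gray_R_def Let_def FF_def dg_def by simp

lemma hdist_gray_R: "hdist (gray_R T g s u) (gray_R T g s w) = E (u - w)"
proof -
  define \<delta> where "\<delta> i = dg u ! i - dg w ! i" for i
  let ?Q = "q ^ (s - 1)"
  let ?P = "\<lambda>m. FF (s - 1) \<delta> m + \<delta> (s - 1) \<in> PI"
  have diff: "(FF (s - 1) (\<lambda>i. dg u ! i) m + dg u ! (s - 1)) - (FF (s - 1) (\<lambda>i. dg w ! i) m + dg w ! (s - 1))
      = FF (s - 1) \<delta> m + \<delta> (s - 1)" for m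
  proof -
    have ab: "(a + x) - (b + y) = (a - b) + (x - y)" for a b x y :: 'a by (simp add: algebra_simps)
    have "FF (s - 1) (\<lambda>i. dg u ! i) m - FF (s - 1) (\<lambda>i. dg w ! i) m = FF (s - 1) \<delta> m"
      unfolding FF_def \<delta>_def by (simp add: sum_subtractf[symmetric] left_diff_distrib)
    then show ?thesis unfolding ab \<delta>_def by simp
  qed
  have "hdist (gray_R T g s u) (gray_R T g s w) = card {m. m < ?Q \<and> \<not> ?P m}"
    unfolding hdist_def gray_R_len
    by (intro arg_cong[where f = card] Collect_cong conj_cong refl)
       (simp only: gray_R_nth residue_eq_iff diff)
  also have "\<dots> = ?Q - card {m. m < ?Q \<and> ?P m}" by (rule card_compl_filter)
  finally have hd: "hdist (gray_R T g s u) (gray_R T g s w) = ?Q - card {m. m < ?Q \<and> ?P m}" .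
  show ?thesis
  proof (cases "u = w")
    case True
    then have "\<delta> = (\<lambda>i. 0)" unfolding \<delta>_def by auto
    then have "?P m" for m unfolding FF_def using PI_ideal_ops(1) by simp
    then show ?thesis using hd True by simp
  next
    case uw: False
    show ?thesis
    proof (cases "\<exists>t. u - w = g ^ (s - 1) * t")
      case True
      then have agree: "\<forall>i<s - 1. dg u ! i = dg w ! i" using dg_close by blast
      then have "\<forall>i<s - 1. \<delta> i = 0" unfolding \<delta>_def by simp
      then have F0: "FF (s - 1) \<delta> m = 0" for m unfolding FF_def by simp
      have "\<delta> (s - 1) \<notin> PI"
      proof
        assume "\<delta> (s - 1) \<in> PI"
        then have "dg u ! (s - 1) = dg w ! (s - 1)"
          unfolding \<delta>_def using T_residue_inj dg_nth_T s_pos by simp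
        then have "dg u ! i = dg w ! i" if "i < s" for i
        proof (cases "i < s - 1")
          case True then show ?thesis using agree by blast
        next
          case False then have "i = s - 1" using that by simp
          then show ?thesis using \<open>dg u ! (s - 1) = dg w ! (s - 1)\<close> by simp
        qed
        then have "dg u = dg w" by (intro nth_equalityI) auto
        then show False using uw dg_inj by blast
      qed
      then have "\<not> ?P m" for m using F0 by simp
      then have se: "{m. m < ?Q \<and> ?P m} = {}" by blast
      have c0: "card {m. m < ?Q \<and> ?P m} = 0" unfolding se by simp
      show ?thesis unfolding hd c0 E_def using uw True by simp
    next
      case False
      then obtain i where i: "i < s - 1" "dg u ! i \<noteq> dg w ! i" using dg_close by blast
      have "i < s" using i(1) by simp
      then have "dg u ! i \<in> set T" "dg w ! i \<in> set T" using dg_nth_T by auto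
      then have "\<delta> i \<notin> PI" unfolding \<delta>_def using T_residue_inj i(2) by blast
      then have "card {m. m < ?Q \<and> ?P m} = q ^ (s - 1 - 1)" using i(1) by (intro count_gen) blast
      then show ?thesis using hd uw False unfolding E_def by (simp add: diff_diff_left numeral_2_eq_2)
    qed
  qed
qed

definition gr where "gr x = gray T g s x"

lemma gray_len: "length (gr x) = length x * q ^ (s - 1)"
  unfolding gr_def gray_def by (induction x) auto

lemma gray_Cons: "gr (a # x) = gray_R T g s a @ gr x"
  unfolding gr_def gray_def by simp

lemma hdist_gray: "length x = length y \<Longrightarrow>
   hdist (gr x) (gr y) = (\<Sum>c<length x. E (x ! c - y ! c))"
proof (induction x y rule: list_induct2)
  case Nil then show ?case unfolding gr_def gray_def hdist_def by simp
next
  case (Cons a x b y)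
  have "hdist (gr (a # x)) (gr (b # y)) = E (a - b) + hdist (gr x) (gr y)"
    unfolding gray_Cons by (subst hdist_append) (simp_all add: hdist_gray_R)
  also have "\<dots> = (\<Sum>c<length (a # x). E ((a # x) ! c - (b # y) ! c))"
    unfolding length_Cons sum.lessThan_Suc_shift using Cons.IH by simp
  finally show ?case .
qed

lemma gray_R_zero: "gray_R T g s 0 = replicate (q ^ (s - 1)) (residue g 0)"
proof (rule nth_equalityI)
  fix m assume "m < length (gray_R T g s 0)"
  then have m: "m < q ^ (s - 1)" by simp
  have "FF (s - 1) (\<lambda>i. dg 0 ! i) m = 0" unfolding FF_def dg_zero by simp
  moreover have "dg 0 ! (s - 1) = 0" unfolding dg_zero using s_pos by simp
  ultimately show "gray_R T g s 0 ! m = replicate (q ^ (s - 1)) (residue g 0) ! m"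
    using gray_R_nth[OF m] m by simp
qed simp

lemma gray_zero: "gr (replicate n 0) = replicate (n * q ^ (s - 1)) (residue g 0)"
proof (induction n)
  case 0 then show ?case unfolding gr_def gray_def by simp
next
  case (Suc n)
  show ?case using Suc by (simp add: gray_Cons gray_R_zero replicate_add[symmetric])
qed

lemma hwt_gray: "hwt (residue g 0) (gr x) = (\<Sum>c<length x. E (x ! c))"
proof -
  have "hwt (residue g 0) (gr x) = hdist (gr x) (gr (replicate (length x) 0))"
    unfolding hwt_def hdist_def gray_zero gray_len
    by (intro arg_cong[where f = card] Collect_cong conj_cong refl) simp
  also have "\<dots> = (\<Sum>c<length x. E (x ! c))" by (subst hdist_gray) simp_all
  finally show ?thesis .
qed

end


context cr begin

lemma gpow_zero_iff: "g ^ (s - 1) * z = 0 \<longleftrightarrow> z \<in> PI"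
proof
  assume h: "g ^ (s - 1) * z = 0"
  show "z \<in> PI"
  proof (rule ccontr)
    assume "z \<notin> PI"
    then obtain v where "z * v = 1" using unit_of_notin by blast
    then have "g ^ (s - 1) = 0" using unit_cancel h by blast
    then show False using s_least s_pos by simp
  qed
next
  assume "z \<in> PI"
  then obtain t where "z = t * g" unfolding PI_iff by blast
  then have "g ^ (s - 1) * z = g ^ Suc (s - 1) * t" by (simp add: mult_ac)
  also have "Suc (s - 1) = s" using s_pos by simp
  finally show "g ^ (s - 1) * z = 0" using s_nil by simp
qed

lemma cardT: "card (set T) = q"
  using lenT T_dist distinct_card by metis

lemma coset_sum: "(\<Sum>e\<in>set T. E (y + e * g ^ (s - 1))) = (q - 1) * q ^ (s - 1)"
proof (cases "\<exists>t. y = g ^ (s - 1) * t")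
  case True
  then obtain t where t: "y = g ^ (s - 1) * t" by blast
  obtain e0 where e0: "e0 \<in> set T" "(- t) - e0 \<in> PI" using T_rep_ex by blast
  have zero_iff: "y + e * g ^ (s - 1) = 0 \<longleftrightarrow> e = e0" if "e \<in> set T" for e
  proof -
    have "y + e * g ^ (s - 1) = g ^ (s - 1) * (t + e)" using t by (simp add: algebra_simps)
    then have "y + e * g ^ (s - 1) = 0 \<longleftrightarrow> t + e \<in> PI" using gpow_zero_iff by simp
    also have "\<dots> \<longleftrightarrow> e = e0"
    proof
      assume "t + e \<in> PI"
      then have "(t + e) + ((- t) - e0) \<in> PI" using e0(2) PI_ideal_ops(2) by blast
      moreover have "(t + e) + ((- t) - e0) = e - e0" by (simp add: algebra_simps)
      ultimately have "e - e0 \<in> PI" by simp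
      then show "e = e0" using T_residue_inj that e0(1) by blast
    next
      assume "e = e0"
      then have "t + e = - ((- t) - e0)" by simp
      then show "t + e \<in> PI" using e0(2) PI_ideal_ops(5) by metis
    qed
    finally show ?thesis .
  qed
  have inR: "\<exists>t'. y + e * g ^ (s - 1) = g ^ (s - 1) * t'" for e
    using t by (intro exI[of _ "t + e"]) (simp add: algebra_simps)
  have "(\<Sum>e\<in>set T. E (y + e * g ^ (s - 1))) = (\<Sum>e\<in>set T. if e = e0 then 0 else q ^ (s - 1))"
  proof (rule sum.cong[OF refl])
    fix e assume e: "e \<in> set T"
    show "E (y + e * g ^ (s - 1)) = (if e = e0 then 0 else q ^ (s - 1))"
    proof (cases "e = e0")
      case True
      then have "y + e * g ^ (s - 1) = 0" using zero_iff e by blast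
      then show ?thesis using True by simp
    next
      case False
      then have "y + e * g ^ (s - 1) \<noteq> 0" using zero_iff e by blast
      then show ?thesis unfolding E_def using inR[of e] False by simp
    qed
  qed
  also have "\<dots> = (\<Sum>e\<in>set T - {e0}. q ^ (s - 1))"
    by (simp add: sum.If_cases Diff_eq)
  also have "\<dots> = (q - 1) * q ^ (s - 1)"
  proof -
    have "card (set T) = q" using lenT T_dist distinct_card by metis
    then show ?thesis using e0(1) by (simp add: card_Diff_singleton)
  qed
  finally show ?thesis .
next
  case False
  have s2: "s \<ge> 2"
  proof (rule ccontr)
    assume "\<not> s \<ge> 2" then have "s = 1" using s_pos by simp
    then show False using False by (metis mult_1 power_0 diff_self_eq_0)
  qed
  have "E (y + e * g ^ (s - 1)) = q ^ (s - 1) - q ^ (s - 2)" for e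
  proof -
    have n: "\<not> (\<exists>t. y + e * g ^ (s - 1) = g ^ (s - 1) * t)"
    proof
      assume "\<exists>t. y + e * g ^ (s - 1) = g ^ (s - 1) * t"
      then obtain t where "y + e * g ^ (s - 1) = g ^ (s - 1) * t" by blast
      then have "y = g ^ (s - 1) * (t - e)" by (simp add: algebra_simps)
      then show False using False by blast
    qed
    then have "y + e * g ^ (s - 1) \<noteq> 0" by (metis mult_zero_right)
    then show ?thesis using n unfolding E_def by simp
  qed
  then have "(\<Sum>e\<in>set T. E (y + e * g ^ (s - 1))) = q * (q ^ (s - 1) - q ^ (s - 2))"
    by (simp add: cardT)
  also have "\<dots> = (q - 1) * q ^ (s - 1)"
  proof -
    obtain s' where s': "s = Suc (Suc s')" using s2 by (metis add_2_eq_Suc le_Suc_ex)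
    show ?thesis unfolding s' by (simp add: diff_mult_distrib diff_mult_distrib2 mult_ac)
  qed
  finally show ?thesis .
qed

end


lemma bij_by_card:
  assumes "inj_on f A" "f ` A \<subseteq> B" "card A = card B" "finite B"
  shows "bij_betw f A B"
proof -
  have "card (f ` A) = card B" using assms(1,3) card_image by metis
  then have "f ` A = B" using assms(2,4) by (intro card_subset_eq) auto
  then show ?thesis using assms(1) unfolding bij_betw_def by blast
qed

lemma upt0_Suc: "[0..<Suc n] = 0 # map Suc [0..<n]"
  by (simp add: map_Suc_upt upt_conv_Cons)

context cr begin

lemma NN_pos: "NN > 0" using q_ge2 by simp

lemma card_lists: "card {xs :: 'a list. length xs = n} = NN ^ n"
proof -
  have "card {xs :: 'a list. set xs \<subseteq> UNIV \<and> length xs = n} = card (UNIV :: 'a set) ^ n"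
    by (rule card_lists_length_eq) simp
  then show ?thesis using card_UNIV_q by simp
qed

lemma finite_lists: "finite {xs :: 'a list. length xs = n}"
proof -
  have "finite {xs :: 'a list. set xs \<subseteq> UNIV \<and> length xs = n}"
    by (rule finite_lists_length_eq) simp
  then show ?thesis by simp
qed

definition col :: "nat \<Rightarrow> nat \<Rightarrow> 'a list" where
  "col k c = map (\<lambda>i. Gm rh NN k i c) [0..<k]"

lemma col_len[simp]: "length (col k c) = k" unfolding col_def by simp

lemma col_nth: "i < k \<Longrightarrow> col k c ! i = Gm rh NN k i c" unfolding col_def by simp

lemma col_SS: "col (Suc (Suc k)) c = rh (c div NN ^ Suc k) # col (Suc k) (c mod NN ^ Suc k)"
  unfolding col_def upt0_Suc[of "Suc k"] by simp

lemma col_bij: "bij_betw (col (Suc k)) {0..<NN ^ Suc k} {xs. length xs = Suc k}"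
proof (induction k)
  case 0
  have inj: "inj_on rh {0..<NN}" using rho_bij bij_betw_imp_inj_on by blast
  show ?case
  proof (rule bij_by_card)
    have c1: "col (Suc 0) c = [rh c]" for c unfolding col_def by simp
    show "inj_on (col (Suc 0)) {0..<NN ^ Suc 0}"
    proof (rule inj_onI)
      fix x y assume "x \<in> {0..<NN ^ Suc 0}" "y \<in> {0..<NN ^ Suc 0}" "col (Suc 0) x = col (Suc 0) y"
      then show "x = y" using inj_onD[OF inj] unfolding c1 by simp
    qed
    show "col (Suc 0) ` {0..<NN ^ Suc 0} \<subseteq> {xs. length xs = Suc 0}" by auto
    show "card {0..<NN ^ Suc 0} = card {xs :: 'a list. length xs = Suc 0}" using card_lists by simp
    show "finite {xs :: 'a list. length xs = Suc 0}" by (rule finite_lists)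
  qed
next
  case (Suc k)
  let ?P = "NN ^ Suc k"
  have inj: "inj_on rh {0..<NN}" using rho_bij bij_betw_imp_inj_on by blast
  have injk: "inj_on (col (Suc k)) {0..<?P}" using Suc.IH bij_betw_imp_inj_on by blast
  show ?case
  proof (rule bij_by_card)
    show "inj_on (col (Suc (Suc k))) {0..<NN ^ Suc (Suc k)}"
    proof (rule inj_onI)
      fix c c' assume c: "c \<in> {0..<NN ^ Suc (Suc k)}" and c': "c' \<in> {0..<NN ^ Suc (Suc k)}"
        and eq: "col (Suc (Suc k)) c = col (Suc (Suc k)) c'"
      have P: "NN ^ Suc (Suc k) = NN * ?P" by (simp only: power_Suc)
      have "c < NN * ?P" using c P by simp
      then have d1: "c div ?P < NN" by (rule less_mult_imp_div_less)
      have "c' < NN * ?P" using c' P by simp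
      then have d2: "c' div ?P < NN" by (rule less_mult_imp_div_less)
      have "rh (c div ?P) = rh (c' div ?P)" using eq unfolding col_SS by simp
      then have dd: "c div ?P = c' div ?P" using inj_onD[OF inj] d1 d2 by simp
      have "col (Suc k) (c mod ?P) = col (Suc k) (c' mod ?P)" using eq unfolding col_SS by simp
      moreover have "c mod ?P < ?P" "c' mod ?P < ?P" using NN_pos by simp_all
      ultimately have mm: "c mod ?P = c' mod ?P" using inj_onD[OF injk] by simp
      have "c = c div ?P * ?P + c mod ?P" "c' = c' div ?P * ?P + c' mod ?P" by (simp_all only: div_mult_mod_eq)
      then show "c = c'" using dd mm by simp
    qed
    show "col (Suc (Suc k)) ` {0..<NN ^ Suc (Suc k)} \<subseteq> {xs. length xs = Suc (Suc k)}" by auto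
    show "card {0..<NN ^ Suc (Suc k)} = card {xs :: 'a list. length xs = Suc (Suc k)}"
      using card_lists by simp
    show "finite {xs :: 'a list. length xs = Suc (Suc k)}" by (rule finite_lists)
  qed
qed

definition dot :: "nat \<Rightarrow> (nat \<Rightarrow> 'a) \<Rightarrow> 'a list \<Rightarrow> 'a" where
  "dot K d xs = (\<Sum>i<K. d i * xs ! i)"

lemma reindex_cols:
  "(\<Sum>c<NN ^ Suc k. F (col (Suc k) c)) = (\<Sum>xs\<in>{xs. length xs = Suc k}. F xs)"
  using sum.reindex_bij_betw[OF col_bij[of k], of F] by (simp add: atLeast0LessThan)

lemma translate_sum:
  assumes "\<exists>i<K. d i \<noteq> 0"
  shows "q * (\<Sum>xs\<in>{xs. length xs = K}. E (dot K d xs)) = NN ^ K * ((q - 1) * q ^ (s - 1))"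
proof -
  let ?L = "{xs :: 'a list. length xs = K}"
  obtain i0 where i0: "i0 < K" "d i0 \<noteq> 0" using assms by blast
  obtain j u v where juv: "j < s" "u * v = 1" "d i0 = g ^ j * u" using valuation[OF i0(2)] by blast
  define w where "w = g ^ (s - 1 - j) * v"
  define x1 where "x1 = map (\<lambda>i. if i = i0 then w else 0) [0..<K]"
  have x1n: "i < K \<Longrightarrow> x1 ! i = (if i = i0 then w else 0)" for i unfolding x1_def by simp
  have "dot K d x1 = (\<Sum>i<K. if i = i0 then d i * w else 0)"
    unfolding dot_def by (rule sum.cong) (auto simp: x1n)
  also have "\<dots> = d i0 * w" using i0(1) by (simp add: sum.delta')
  also have "\<dots> = g ^ (j + (s - 1 - j)) * (u * v)" unfolding juv(3) w_def power_add by (simp add: mult_ac)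
  also have "\<dots> = g ^ (s - 1)" using juv(1,2) by simp
  finally have dx1: "dot K d x1 = g ^ (s - 1)" .
  define tau where "tau t xs = map (\<lambda>i. xs ! i + t * x1 ! i) [0..<K]" for t xs
  have tau_len: "length (tau t xs) = K" for t xs unfolding tau_def by simp
  have tau_inv: "tau (- t) (tau t xs) = xs" if "length xs = K" for t xs
    using that unfolding tau_def by (intro nth_equalityI) auto
  have tau_bij: "bij_betw (tau t) ?L ?L" for t
  proof (rule bij_betw_byWitness[where f' = "tau (- t)"])
    show "tau t ` ?L \<subseteq> ?L" using tau_len by auto
    show "tau (- t) ` ?L \<subseteq> ?L" using tau_len by auto
    show "\<forall>x\<in>?L. tau (- t) (tau t x) = x" using tau_inv by simp
    show "\<forall>x\<in>?L. tau t (tau (- t) x) = x" using tau_inv[of _ "- t"] by simp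
  qed
  have dot_tau: "dot K d (tau t xs) = dot K d xs + t * g ^ (s - 1)" for t xs
  proof -
    have "dot K d (tau t xs) = (\<Sum>i<K. d i * xs ! i + t * (d i * x1 ! i))"
      unfolding dot_def tau_def by (rule sum.cong) (auto simp: algebra_simps)
    also have "\<dots> = dot K d xs + t * dot K d x1"
      unfolding dot_def by (simp add: sum.distrib sum_distrib_left)
    finally show ?thesis using dx1 by simp
  qed
  have shift: "(\<Sum>xs\<in>?L. E (dot K d xs)) = (\<Sum>xs\<in>?L. E (dot K d xs + t * g ^ (s - 1)))" for t
    using sum.reindex_bij_betw[OF tau_bij[of t], of "\<lambda>xs. E (dot K d xs)"] dot_tau by simp
  have "q * (\<Sum>xs\<in>?L. E (dot K d xs)) = (\<Sum>e\<in>set T. \<Sum>xs\<in>?L. E (dot K d xs))"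
    by (simp add: cardT)
  also have "\<dots> = (\<Sum>e\<in>set T. \<Sum>xs\<in>?L. E (dot K d xs + e * g ^ (s - 1)))"
    using shift by simp
  also have "\<dots> = (\<Sum>xs\<in>?L. \<Sum>e\<in>set T. E (dot K d xs + e * g ^ (s - 1)))"
    by (rule sum.swap)
  also have "\<dots> = (\<Sum>xs\<in>?L. (q - 1) * q ^ (s - 1))" using coset_sum by simp
  also have "\<dots> = NN ^ K * ((q - 1) * q ^ (s - 1))" using card_lists by simp
  finally show ?thesis .
qed

end


context cr begin

lemma main:
  assumes k1: "k \<ge> 1"
  shows "(\<forall>c \<in> gray T g s ` S_mod T g s k. length c = resq g ^ (s * (k + 1) - 1))
       \<and> card (gray T g s ` S_mod T g s k) = resq g ^ (s * k)
       \<and> min_dist (gray T g s ` S_mod T g s k) = resq g ^ (s * (k + 1) - 2) * (resq g - 1)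
       \<and> (\<forall>X Y :: real. weight_enum (residue g 0) (gray T g s ` S_mod T g s k) (resq g ^ (s * (k + 1) - 1)) X Y
            = real (resq g ^ (s * k) - 1)
                * X ^ (resq g ^ (s * (k + 1) - 1) - resq g ^ (s * (k + 1) - 2) * (resq g - 1))
                * Y ^ (resq g ^ (s * (k + 1) - 2) * (resq g - 1))
              + X ^ (resq g ^ (s * (k + 1) - 1)))"
proof -
  obtain k' where kk: "k = Suc k'" using k1 by (cases k) auto
  define ell where "ell = q ^ (s * (k + 1) - 2) * (q - 1)"
  define n where "n = q ^ (s * (k + 1) - 1)"
  define m where "m = s * (k + 1) - 1"
  have "1 * 2 \<le> s * (k + 1)" using s_pos k1 by (intro mult_le_mono) auto
  then have m1: "m \<ge> 1" unfolding m_def by simp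
  obtain m' where mS: "m = Suc m'" using m1 by (cases m) auto
  have mm: "m = s * k + (s - 1)" unfolding m_def using s_pos by (simp add: algebra_simps)
  have m2: "s * (k + 1) - 2 = m - 1" unfolding m_def by simp
  have qpow: "q ^ (s * k) = NN ^ k" by (simp add: power_mult)
  have "q * ell = q ^ m * (q - 1)" unfolding ell_def m2 mS by simp
  also have "\<dots> = NN ^ k * ((q - 1) * q ^ (s - 1))" unfolding mm power_add qpow by (simp add: mult_ac)
  finally have lq: "q * ell = NN ^ k * ((q - 1) * q ^ (s - 1))" .
  have ell_pos: "ell > 0" unfolding ell_def using q_ge2 by simp
  have ell_le: "ell \<le> n"
  proof -
    have "ell \<le> q ^ (m - 1) * q" unfolding ell_def m2 using q_ge2 by simp
    also have "\<dots> = q ^ m" unfolding mS by simp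
    finally show ?thesis unfolding n_def m_def .
  qed
  define cwd where "cwd a = map (\<lambda>c. \<Sum>i<k. a i * Gm rh NN k i c) [0..<NN ^ k]" for a
  have S_eq: "S_mod T g s k = range cwd"
    unfolding S_mod_def cwd_def qpow by auto
  have cwd_len: "length (cwd a) = NN ^ k" for a unfolding cwd_def by simp
  have cwd_nth: "c < NN ^ k \<Longrightarrow> cwd a ! c = dot k a (col k c)" for a c
    unfolding cwd_def dot_def by (simp add: col_nth)
  let ?L = "{xs :: 'a list. length xs = k}"
  have sumE: "(\<Sum>c<NN ^ k. E (dot k d (col k c))) = (if \<exists>i<k. d i \<noteq> 0 then ell else 0)" for d
  proof -
    have "(\<Sum>c<NN ^ k. E (dot k d (col k c))) = (\<Sum>xs\<in>?L. E (dot k d xs))"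
      unfolding kk by (rule reindex_cols)
    moreover have "(\<Sum>xs\<in>?L. E (dot k d xs)) = (if \<exists>i<k. d i \<noteq> 0 then ell else 0)"
    proof (cases "\<exists>i<k. d i \<noteq> 0")
      case True
      then have "q * (\<Sum>xs\<in>?L. E (dot k d xs)) = q * ell" using translate_sum lq by simp
      then show ?thesis using True q_ge2 by simp
    next
      case False
      then have "dot k d xs = 0" for xs unfolding dot_def by simp
      then have "(\<Sum>xs\<in>?L. E (dot k d xs)) = 0" by simp
      then show ?thesis using False by (simp only: if_False)
    qed
    ultimately show ?thesis by simp
  qed
  have dist: "hdist (gr (cwd a)) (gr (cwd b)) = (if \<exists>i<k. a i \<noteq> b i then ell else 0)" for a b
  proof -
    have "hdist (gr (cwd a)) (gr (cwd b)) = (\<Sum>c<NN ^ k. E (cwd a ! c - cwd b ! c))"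
      using hdist_gray[of "cwd a" "cwd b"] cwd_len by simp
    also have "\<dots> = (\<Sum>c<NN ^ k. E (dot k (\<lambda>i. a i - b i) (col k c)))"
      by (rule sum.cong) (simp_all add: cwd_nth dot_def sum_subtractf left_diff_distrib)
    also have "\<dots> = (if \<exists>i<k. a i - b i \<noteq> 0 then ell else 0)" by (rule sumE)
    finally show ?thesis by simp
  qed
  have wt: "hwt (residue g 0) (gr (cwd a)) = (if \<exists>i<k. a i \<noteq> 0 then ell else 0)" for a
  proof -
    have "hwt (residue g 0) (gr (cwd a)) = (\<Sum>c<NN ^ k. E (cwd a ! c))"
      using hwt_gray cwd_len by simp
    also have "\<dots> = (\<Sum>c<NN ^ k. E (dot k a (col k c)))"
      by (rule sum.cong) (simp_all add: cwd_nth)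
    also have "\<dots> = (if \<exists>i<k. a i \<noteq> 0 then ell else 0)" by (rule sumE)
    finally show ?thesis .
  qed
  define Phi where "Phi v = gr (cwd (\<lambda>i. v ! i))" for v :: "'a list"
  have C_eq: "gray T g s ` S_mod T g s k = Phi ` ?L"
  proof -
    have "cwd a = cwd (\<lambda>i. map a [0..<k] ! i)" for a unfolding cwd_def by simp
    then have "range cwd = (\<lambda>v. cwd (\<lambda>i. v ! i)) ` ?L" by force
    then show ?thesis unfolding S_eq Phi_def gr_def[abs_def] by (simp add: image_image)
  qed
  have hd_self: "hdist x x = 0" for x :: "'a set list" unfolding hdist_def by simp
  have Phi_dist: "v \<in> ?L \<Longrightarrow> v' \<in> ?L \<Longrightarrow> v \<noteq> v' \<Longrightarrow> hdist (Phi v) (Phi v') = ell" for v v'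
  proof -
    assume v: "v \<in> ?L" and v': "v' \<in> ?L" and ne: "v \<noteq> v'"
    then have "\<exists>i<k. v ! i \<noteq> v' ! i" using nth_equalityI[of v v'] by auto
    then show ?thesis unfolding Phi_def dist by simp
  qed
  have Phi_inj: "inj_on Phi ?L"
  proof (rule inj_onI)
    fix v v' assume "v \<in> ?L" "v' \<in> ?L" "Phi v = Phi v'"
    then show "v = v'" using Phi_dist hd_self ell_pos by (metis less_irrefl)
  qed
  have cardC: "card (gray T g s ` S_mod T g s k) = NN ^ k"
    unfolding C_eq using card_image[OF Phi_inj] card_lists by simp
  have lens: "\<forall>c \<in> gray T g s ` S_mod T g s k. length c = q ^ (s * (k + 1) - 1)"
  proof
    fix c assume "c \<in> gray T g s ` S_mod T g s k"
    then obtain v where "c = Phi v" unfolding C_eq by blast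
    then have "length c = NN ^ k * q ^ (s - 1)" unfolding Phi_def using gray_len cwd_len by simp
    also have "\<dots> = q ^ m" unfolding mm power_add qpow ..
    finally show "length c = q ^ (s * (k + 1) - 1)" unfolding m_def .
  qed
  define z where "z = replicate k (0::'a)"
  define o1 where "o1 = (1::'a) # replicate k' 0"
  have zL: "z \<in> ?L" unfolding z_def by simp
  have oL: "o1 \<in> ?L" unfolding o1_def kk by simp
  have zo: "z \<noteq> o1" unfolding z_def o1_def kk by simp
  have D_eq: "{hdist c d | c d. c \<in> Phi ` ?L \<and> d \<in> Phi ` ?L \<and> c \<noteq> d} = {ell}"
  proof
    show "{hdist c d | c d. c \<in> Phi ` ?L \<and> d \<in> Phi ` ?L \<and> c \<noteq> d} \<subseteq> {ell}"
      using Phi_dist by fastforce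
    have "Phi z \<noteq> Phi o1" using inj_onD[OF Phi_inj] zL oL zo by blast
    moreover have "hdist (Phi z) (Phi o1) = ell" using Phi_dist zL oL zo by blast
    ultimately show "{ell} \<subseteq> {hdist c d | c d. c \<in> Phi ` ?L \<and> d \<in> Phi ` ?L \<and> c \<noteq> d}"
      using zL oL by blast
  qed
  have md: "min_dist (gray T g s ` S_mod T g s k) = ell"
    unfolding min_dist_def C_eq D_eq by simp
  have Phi_wt: "v \<in> ?L \<Longrightarrow> hwt (residue g 0) (Phi v) = (if v = z then 0 else ell)" for v
  proof -
    assume v: "v \<in> ?L"
    have "v \<noteq> z \<longleftrightarrow> (\<exists>i<k. v ! i \<noteq> 0)"
    proof
      assume "v \<noteq> z"
      then show "\<exists>i<k. v ! i \<noteq> 0" using v unfolding z_def by (auto intro: nth_equalityI)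
    next
      assume "\<exists>i<k. v ! i \<noteq> 0"
      then obtain i where "i < k" "v ! i \<noteq> 0" by blast
      then show "v \<noteq> z" unfolding z_def by auto
    qed
    then show ?thesis unfolding Phi_def wt by auto
  qed
  have cnt: "card {c \<in> gray T g s ` S_mod T g s k. hwt (residue g 0) c = i}
      = (if i = 0 then 1 else if i = ell then NN ^ k - 1 else 0)" for i
  proof -
    let ?V = "{v \<in> ?L. hwt (residue g 0) (Phi v) = i}"
    have e1: "{c \<in> Phi ` ?L. hwt (residue g 0) c = i} = Phi ` ?V"
      by blast
    have "inj_on Phi ?V"
      using Phi_inj by (rule inj_on_subset) blast
    then have c1: "card {c \<in> Phi ` ?L. hwt (residue g 0) c = i} = card ?V"
      unfolding e1 by (rule card_image)
    have s1: "?V = {v \<in> ?L. (if v = z then 0 else ell) = i}"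
    proof (rule Collect_cong)
      fix v show "(v \<in> ?L \<and> hwt (residue g 0) (Phi v) = i) = (v \<in> ?L \<and> (if v = z then 0 else ell) = i)"
        using Phi_wt[of v] by auto
    qed
    show ?thesis
    proof (cases "i = 0")
      case True
      have "?V = {z}"
      proof
        show "?V \<subseteq> {z}" unfolding s1 using True ell_pos by auto
        show "{z} \<subseteq> ?V" unfolding s1 using True zL by simp
      qed
      note vz = this
      show ?thesis unfolding C_eq c1 vz using True by simp
    next
      case F0: False
      show ?thesis
      proof (cases "i = ell")
        case True
        have "?V = ?L - {z}"
        proof
          show "?V \<subseteq> ?L - {z}" unfolding s1 using True F0 by auto
          show "?L - {z} \<subseteq> ?V" unfolding s1 using True by auto
        qed
        moreover have "card (?L - {z}) = NN ^ k - 1"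
          using card_lists zL finite_lists by (simp add: card_Diff_singleton)
        ultimately show ?thesis unfolding C_eq c1 using True F0 by (simp only: if_False if_True) simp
      next
        case False
        have ve: "?V = {}" unfolding s1 using False F0 by auto
        show ?thesis unfolding C_eq c1 ve using False F0 by simp
      qed
    qed
  qed
  have we: "weight_enum (residue g 0) (gray T g s ` S_mod T g s k) n X Y
      = real (NN ^ k - 1) * X ^ (n - ell) * Y ^ ell + X ^ n" for X Y :: real
  proof -
    let ?f = "\<lambda>i. real (card {c \<in> gray T g s ` S_mod T g s k. hwt (residue g 0) c = i}) * X ^ (n - i) * Y ^ i"
    have "weight_enum (residue g 0) (gray T g s ` S_mod T g s k) n X Y = (\<Sum>i\<le>n. ?f i)"
      unfolding weight_enum_def ..
    also have "\<dots> = (\<Sum>i\<in>{0, ell}. ?f i)"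
      by (rule sum.mono_neutral_right) (auto simp: cnt ell_le)
    also have "\<dots> = ?f 0 + ?f ell" using ell_pos by simp
    also have "\<dots> = X ^ n + real (NN ^ k - 1) * X ^ (n - ell) * Y ^ ell"
      using ell_pos by (simp add: cnt)
    finally show ?thesis by simp
  qed
  show ?thesis using lens cardC md we qpow unfolding ell_def n_def by simp
qed

end


theorem theorem3p16:
  fixes g :: "'a::{comm_ring_1,finite}" and T :: "'a list" and s k :: nat
  assumes chain: "chain_ring TYPE('a)"
    and maxg: "is_maximal_ideal (principal_ideal g)"
    and s_nil: "g ^ s = 0" and s_least: "\<forall>i<s. g ^ i \<noteq> 0"
    and T_dist: "distinct T"
    and T_reps: "\<forall>r. \<exists>!e. e \<in> set T \<and> residue g e = residue g r"
    and T0: "T ! 0 = 0" and T1: "T ! 1 = 1"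
    and k1: "k \<ge> 1"
  shows "(\<forall>c \<in> gray T g s ` S_mod T g s k. length c = resq g ^ (s * (k + 1) - 1))
       \<and> card (gray T g s ` S_mod T g s k) = resq g ^ (s * k)
       \<and> min_dist (gray T g s ` S_mod T g s k) = resq g ^ (s * (k + 1) - 2) * (resq g - 1)
       \<and> (\<forall>X Y :: real. weight_enum (residue g 0) (gray T g s ` S_mod T g s k) (resq g ^ (s * (k + 1) - 1)) X Y
            = real (resq g ^ (s * k) - 1)
                * X ^ (resq g ^ (s * (k + 1) - 1) - resq g ^ (s * (k + 1) - 2) * (resq g - 1))
                * Y ^ (resq g ^ (s * (k + 1) - 2) * (resq g - 1))
              + X ^ (resq g ^ (s * (k + 1) - 1)))"
proof -
  have "cr g T s" unfolding cr_def using chain maxg s_nil s_least T_dist T_reps T0 by blast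
  then interpret cr g T s .
  show ?thesis using main[OF k1] .
qed

end
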